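(* Let $\chi^{(n)}=\sum_{k=1}^{k_n}\delta_{\tau_k^{(n)}}$ be a sequence of point processes on $\mathbb{R}$ such that for every $n$ the sequence $\tau_k^{(n)}$ ($1\le k\le k_n$) is decreasing, and set $\tau_k^{(n)}=-\infty$ for $k>k_n$. Let $f\in C^2(\mathbb{R})$ satisfy $f(x)>0$, $f'(x)<0$, $f''(x)>0$ for all $x\in\mathbb{R}$ and $\lim_{x\to+\infty}f'(x)=0$. Assume that for every positive integer $k$ and all $x_1,\dots,x_k\in\mathbb{R}$, $$\lim_{n\to+\infty}\mathbb{E}\sum_{i_1,\dots,i_k\text{ all distinct}}\ \prod_{j=1}^k\big(\tau_{i_j}^{(n)}-x_j\big)_+=\prod_{j=1}^kf(x_j),$$ where the sum is over pairwise distinct indices $i_1,\dots,i_k\in\{1,\dots,k_n\}$. Then for $A=(x,+\infty)$ or $A=[x,+\infty)$, $\chi^{(n)}(A)$ converges in law to a Poisson random variable with mean $-f'(x)$. Furthermore, for every positive integer $k$ and every bounded interval $I\subset\mathbb{R}$, $$\lim_{n\to+\infty}\mathbb{P}(\tau_k^{(n)}\in I)=\int_I\frac{f''(x)(-f'(x))^{k-1}}{(k-1)!}e^{f'(x)}\,dx.$$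
   Context: $y_+=\max(y,0)$. *)

theory Defs
  imports "HOL-Probability.Probability"
begin

definition count_in :: "nat \<Rightarrow> (nat \<Rightarrow> real) \<Rightarrow> real set \<Rightarrow> nat" where
  "count_in K tau A = card {k \<in> {1..K}. tau k \<in> A}"

definition factorial_moment_sum :: "nat \<Rightarrow> (nat \<Rightarrow> real) \<Rightarrow> nat \<Rightarrow> (nat \<Rightarrow> real) \<Rightarrow> real" where
  "factorial_moment_sum K tau m x =
     (\<Sum>i\<in>{i. i \<in> {1..m} \<rightarrow>\<^sub>E {1..K} \<and> inj_on i {1..m}}.
        \<Prod>j\<in>{1..m}. max (tau (i j) - x j) 0)"

end

theory Submission
  imports Defs
begin

definition ffn :: "nat \<Rightarrow> nat \<Rightarrow> nat" where "ffn N m = prod ((-) N) {0..<m}"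
definition Inj :: "nat \<Rightarrow> nat \<Rightarrow> (nat\<Rightarrow>nat) set" where
  "Inj m K = {i. i \<in> {1..m} \<rightarrow>\<^sub>E {1..K} \<and> inj_on i {1..m}}"

lemma finite_Inj: "finite (Inj m K)"
proof -
  have "Inj m K \<subseteq> {1..m} \<rightarrow>\<^sub>E {1..K}" by (auto simp: Inj_def)
  moreover have "finite ({1..m} \<rightarrow>\<^sub>E {1..K::nat})" by (intro finite_PiE) auto
  ultimately show ?thesis by (rule finite_subset)
qed

lemma count_inj: "finite C \<Longrightarrow> card {i \<in> {1..m} \<rightarrow>\<^sub>E C. inj_on i {1..m::nat}} = ffn (card C) m"
  using card_inj_on_subset_funcset[of "{1..m}" C "{1..m}"] by (simp add: ffn_def)

lemma prod_ind:
  assumes "finite J"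
  shows "(\<Prod>j\<in>J. if P j then 1 else 0::real) = (if \<forall>j\<in>J. P j then 1 else 0)"
proof (cases "\<forall>j\<in>J. P j")
  case True then show ?thesis by simp
next
  case False
  then obtain j where "j \<in> J" "\<not> P j" by blast
  then show ?thesis using assms False by (auto intro!: prod_zero)
qed

lemma sum_ind:
  "(\<Sum>i\<in>Inj m K. \<Prod>j\<in>{1..m}. (if p (i j) \<in> A then 1 else 0::real)) = real (ffn (count_in K p A) m)"
proof -
  let ?C = "{k \<in> {1..K}. p k \<in> A}"
  have "(\<Sum>i\<in>Inj m K. \<Prod>j\<in>{1..m}. (if p (i j) \<in> A then 1 else 0::real))
      = (\<Sum>i\<in>Inj m K. (if (\<forall>j\<in>{1..m}. p (i j) \<in> A) then 1 else 0::real))"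
    by (intro sum.cong refl prod_ind) simp
  also have "\<dots> = real (card {i\<in>Inj m K. \<forall>j\<in>{1..m}. p (i j) \<in> A})"
    using finite_Inj by (simp add: sum.If_cases Int_def conj_commute)
  also have "{i\<in>Inj m K. \<forall>j\<in>{1..m}. p (i j) \<in> A} = {i \<in> {1..m} \<rightarrow>\<^sub>E ?C. inj_on i {1..m}}"
    by (auto simp: Inj_def PiE_def Pi_def)
  also have "card \<dots> = ffn (card ?C) m" by (rule count_inj) auto
  finally show ?thesis by (simp add: count_in_def)
qed

lemma prod_diff_expand:
  fixes a b :: "'a \<Rightarrow> 'c::comm_ring_1"
  assumes "finite J"
  shows "(\<Prod>j\<in>J. a j - b j) = (\<Sum>X\<in>Pow J. (-1)^card (J - X) * (\<Prod>j\<in>J. if j \<in> X then a j else b j))"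
proof -
  have "(\<Prod>j\<in>J. a j - b j) = (\<Prod>j\<in>J. a j + (- b j))" by simp
  also have "\<dots> = (\<Sum>X\<in>Pow J. (\<Prod>j\<in>X. a j) * (\<Prod>j\<in>J-X. - b j))"
    by (rule prod_add[OF assms])
  also have "\<dots> = (\<Sum>X\<in>Pow J. (-1)^card (J - X) * (\<Prod>j\<in>J. if j \<in> X then a j else b j))"
  proof (intro sum.cong refl)
    fix X assume X: "X \<in> Pow J"
    have fX: "finite X" using X assms finite_subset by auto
    have "(\<Prod>j\<in>J. if j \<in> X then a j else b j) = (\<Prod>j\<in>J \<inter> X. a j) * (\<Prod>j\<in>J - X. b j)"
      using assms by (simp add: prod.If_cases Diff_eq)
    also have "J \<inter> X = X" using X by auto
    finally show "(\<Prod>j\<in>X. a j) * (\<Prod>j\<in>J-X. - b j) = (-1)^card (J - X) * (\<Prod>j\<in>J. if j \<in> X then a j else b j)"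
      by (simp add: prod_uminus)
  qed
  finally show ?thesis .
qed

lemma D_expand:
  "(\<Sum>i\<in>Inj m K. \<Prod>j\<in>{1..m}. max (p (i j) - x j) 0 - max (p (i j) - x' j) 0)
   = (\<Sum>X\<in>Pow {1..m}. (-1)^card ({1..m} - X) *
        factorial_moment_sum K p m (\<lambda>j. if j \<in> X then x j else x' j))"
proof -
  have "(\<Sum>i\<in>Inj m K. \<Prod>j\<in>{1..m}. max (p (i j) - x j) 0 - max (p (i j) - x' j) 0)
     = (\<Sum>i\<in>Inj m K. \<Sum>X\<in>Pow {1..m}. (-1)^card ({1..m} - X) *
          (\<Prod>j\<in>{1..m}. max (p (i j) - (if j \<in> X then x j else x' j)) 0))"
    by (intro sum.cong refl, subst prod_diff_expand) (auto intro!: sum.cong prod.cong)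
  also have "\<dots> = (\<Sum>X\<in>Pow {1..m}. \<Sum>i\<in>Inj m K. (-1)^card ({1..m} - X) *
          (\<Prod>j\<in>{1..m}. max (p (i j) - (if j \<in> X then x j else x' j)) 0))"
    by (rule sum.swap)
  also have "\<dots> = (\<Sum>X\<in>Pow {1..m}. (-1)^card ({1..m} - X) *
        factorial_moment_sum K p m (\<lambda>j. if j \<in> X then x j else x' j))"
    by (simp add: factorial_moment_sum_def Inj_def sum_distrib_left)
  finally show ?thesis .
qed

definition Dsum :: "nat \<Rightarrow> (nat \<Rightarrow> real) \<Rightarrow> nat \<Rightarrow> (nat \<Rightarrow> real) \<Rightarrow> (nat \<Rightarrow> real) \<Rightarrow> real" where
  "Dsum K p m x x' = (\<Sum>i\<in>Inj m K. \<Prod>j\<in>{1..m}. max (p (i j) - x j) 0 - max (p (i j) - x' j) 0)"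

lemma sum_ind_h:
  "(\<Sum>i\<in>Inj m K. \<Prod>j\<in>{1..m}. h * (if p (i j) \<in> A then 1 else 0::real)) = h^m * real (ffn (count_in K p A) m)"
  using sum_ind[where m=m and K=K and p=p and A=A] by (simp add: prod.distrib sum_distrib_left[symmetric])

lemma D_bounds:
  assumes h: "h > 0"
  shows "h^m * real (ffn (count_in K p {y+h..}) m) \<le> Dsum K p m (\<lambda>_. y) (\<lambda>_. y+h)"
    and "Dsum K p m (\<lambda>_. y) (\<lambda>_. y+h) \<le> h^m * real (ffn (count_in K p {y<..}) m)"
proof -
  have t1: "h * (if q \<in> {y+h..} then 1 else 0) \<le> max (q - y) 0 - max (q - (y+h)) 0" for q
    using h by auto
  have t2: "max (q - y) 0 - max (q - (y+h)) 0 \<le> h * (if q \<in> {y<..} then 1 else 0)" for q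
    using h by auto
  have t0: "0 \<le> h * (if q \<in> A then 1 else 0::real)" for q A using h by auto
  show "h^m * real (ffn (count_in K p {y+h..}) m) \<le> Dsum K p m (\<lambda>_. y) (\<lambda>_. y+h)"
    unfolding Dsum_def sum_ind_h[symmetric]
    by (intro sum_mono prod_mono conjI t0 t1)
  show "Dsum K p m (\<lambda>_. y) (\<lambda>_. y+h) \<le> h^m * real (ffn (count_in K p {y<..}) m)"
    unfolding Dsum_def sum_ind_h[symmetric]
    by (intro sum_mono prod_mono conjI t2) (use h in auto)
qed

lemma ffn_mono: "N \<le> N' \<Longrightarrow> ffn N m \<le> ffn N' m"
  unfolding ffn_def by (intro prod_mono) auto



lemma ffn_choose: "real (ffn N k) = fact k * real (N choose k)"
proof -
  have "fact k * real (N choose k) = (\<Prod>i = 0..<k. real N - of_nat i)"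
    using gbinomial_mult_fact'[of "real N" k] by (simp add: binomial_gbinomial mult.commute)
  also have "\<dots> = real (ffn N k)"
  proof (cases "k \<le> N")
    case True
    then show ?thesis unfolding ffn_def by (simp add: of_nat_prod of_nat_diff)
  next
    case False
    then have "N \<in> {0..<k}" by auto
    then have "(\<Prod>i = 0..<k. real N - of_nat i) = 0" "ffn N k = 0"
      unfolding ffn_def by (auto intro!: prod_zero bexI[of _ N])
    then show ?thesis by simp
  qed
  finally show ?thesis by simp
qed

lemma alt_partial:
  assumes "r \<ge> 1"
  shows "(\<Sum>i\<le>L. (-1)^i * real (r choose i)) = (-1)^L * real ((r-1) choose L)"
proof (induction L)
  case 0 then show ?case by simp
next
  case (Suc L)
  obtain s where r: "r = Suc s" using assms by (cases r) auto
  have "(\<Sum>i\<le>Suc L. (-1)^i * real (r choose i)) = (-1)^L * real (s choose L) + (-1)^(Suc L) * real (r choose Suc L)"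
    using Suc by (simp add: r)
  also have "\<dots> = (-1)^Suc L * real (s choose Suc L)"
    by (simp add: r algebra_simps)
  finally show ?case by (simp add: r)
qed

lemma bonf_closed:
  "(\<Sum>i\<le>L. (-1)^i * real ((j+i) choose j) * real (N choose (j+i))) = real (N choose j) * (\<Sum>i\<le>L. (-1)^i * real ((N-j) choose i))"
proof -
  have "real ((j+i) choose j) * real (N choose (j+i)) = real (N choose j) * real ((N-j) choose i)" for i
  proof (cases "j + i \<le> N")
    case True
    then show ?thesis using choose_mult[of j "j+i" N]
      by (metis add_diff_cancel_left' le_add1 mult.commute of_nat_mult)
  next
    case False
    then have "N choose (j+i) = 0" by simp
    moreover have "N choose j = 0 \<or> (N - j) choose i = 0" using False by (cases "j \<le> N") auto
    ultimately show ?thesis by (metis mult_zero_left mult_zero_right of_nat_0)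
  qed
  then show ?thesis by (simp add: sum_distrib_left mult.assoc mult.left_commute)
qed

lemma bonf_ineq:
  fixes L j N :: nat
  defines "B \<equiv> (\<Sum>i\<le>L. (-1)^i * real ((j+i) choose j) * real (N choose (j+i)))"
  shows "even L \<Longrightarrow> (if N = j then 1 else 0) \<le> B"
    and "odd L \<Longrightarrow> B \<le> (if N = j then 1 else 0)"
proof -
  have c: "B = (if N < j then 0 else if N = j then 1 else real (N choose j) * ((-1)^L * real ((N-j-1) choose L)))"
  proof -
    consider "N < j" | "N = j" | "N > j" by linarith
    then show ?thesis
    proof cases
      case 1 then show ?thesis unfolding B_def bonf_closed by simp
    next
      case 2 then have "(\<Sum>i\<le>L. (-1)^i * real ((N-j) choose i)) = (\<Sum>i\<in>{0}. (-1)^i * real ((N-j) choose i))"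
        by (intro sum.mono_neutral_right) auto
      then show ?thesis using 2 unfolding B_def bonf_closed by simp
    next
      case 3 then show ?thesis unfolding B_def bonf_closed using alt_partial[of "N-j" L] by simp
    qed
  qed
  show "even L \<Longrightarrow> (if N = j then 1 else 0) \<le> B" unfolding c by auto
  show "odd L \<Longrightarrow> B \<le> (if N = j then 1 else 0)" unfolding c by auto
qed



lemma aux_field: "c \<noteq> 0 \<Longrightarrow> a \<noteq> 0 \<Longrightarrow> b \<noteq> 0 \<Longrightarrow> s * (c/(a*b)) / c * (x*y) = x/a * (s*y/b)"
  for s c a b x y :: real by (simp add: field_simps)

lemma t1: "real ((j+i) choose j) = fact (j+i) / (fact j * fact i)"
  using binomial_fact[of j "j+i"] by simp

lemma t2: "(-lam)^i /\<^sub>R fact i = (-1)^i * lam^i / (fact i::real)"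
proof -
  have "(-lam)^i = (-1)^i * lam^i" by (rule power_minus)
  moreover have "x /\<^sub>R (fact i) = x / (fact i::real)" for x :: real
    by (simp add: divide_inverse mult.commute)
  ultimately show ?thesis by simp
qed

lemma T_lim:
  fixes lam :: real
  shows "(\<lambda>L. \<Sum>i\<le>L. (-1)^i * real ((j+i) choose j) / fact (j+i) * lam^(j+i)) \<longlonglongrightarrow> lam^j / fact j * exp (-lam)"
proof -
  have eq: "(\<Sum>i\<le>L. (-1)^i * real ((j+i) choose j) / fact (j+i) * lam^(j+i)) =
        lam^j / fact j * (\<Sum>i<Suc L. (-lam)^i /\<^sub>R fact i)" for L
  proof -
    have "(-1)^i * real ((j+i) choose j) / fact (j+i) * lam^(j+i) = lam^j / fact j * ((-lam)^i /\<^sub>R fact i)" for i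
      unfolding t1 t2 power_add by (rule aux_field) auto
    then show ?thesis by (simp only: sum_distrib_left lessThan_Suc_atMost)
  qed
  have "(\<lambda>L. \<Sum>i<L. (-lam)^i /\<^sub>R fact i) \<longlonglongrightarrow> exp (-lam)"
    using exp_converges[of "-lam"] by (simp only: sums_def)
  then have "(\<lambda>L. \<Sum>i<Suc L. (-lam)^i /\<^sub>R fact i) \<longlonglongrightarrow> exp (-lam)"
    by (rule LIMSEQ_Suc)
  then show ?thesis unfolding eq by (intro tendsto_mult tendsto_const)
qed

lemma poisson_conv:
  fixes M :: "nat \<Rightarrow> 'a measure" and N :: "nat \<Rightarrow> 'a \<Rightarrow> nat" and lam :: real
  assumes prob: "\<And>n. prob_space (M n)" and Nm: "\<And>n. N n \<in> M n \<rightarrow>\<^sub>M count_space UNIV"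
    and integ: "\<And>m. eventually (\<lambda>n. integrable (M n) (\<lambda>\<omega>. real (ffn (N n \<omega>) m))) sequentially"
    and lim: "\<And>m. (\<lambda>n. \<integral>\<omega>. real (ffn (N n \<omega>) m) \<partial>M n) \<longlonglongrightarrow> lam^m"
  shows "(\<lambda>n. measure (M n) {\<omega>\<in>space (M n). N n \<omega> = j}) \<longlonglongrightarrow> lam^j / fact j * exp (-lam)"
proof -
  define c where "c i = (-1)^i * real ((j+i) choose j) / fact (j+i)" for i
  define B where "B L k = (\<Sum>i\<le>L. (-1)^i * real ((j+i) choose j) * real (k choose (j+i)))" for L k
  define T where "T L = (\<Sum>i\<le>L. c i * lam^(j+i))" for L
  define p where "p = lam^j / fact j * exp (-lam)"
  have B_ffn: "B L k = (\<Sum>i\<le>L. c i * real (ffn k (j+i)))" for L k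
    unfolding B_def c_def ffn_choose by (intro sum.cong refl) (simp add: field_simps)
  have intB: "eventually (\<lambda>n. integrable (M n) (\<lambda>\<omega>. B L (N n \<omega>))) sequentially" for L
  proof -
    have "eventually (\<lambda>n. \<forall>i\<in>{..L}. integrable (M n) (\<lambda>\<omega>. real (ffn (N n \<omega>) (j+i)))) sequentially"
      by (intro eventually_ball_finite ballI integ) auto
    then show ?thesis unfolding B_ffn by eventually_elim auto
  qed
  have EB: "(\<lambda>n. \<integral>\<omega>. B L (N n \<omega>) \<partial>M n) \<longlonglongrightarrow> T L" for L
  proof -
    have ev: "eventually (\<lambda>n. \<forall>i\<in>{..L}. integrable (M n) (\<lambda>\<omega>. real (ffn (N n \<omega>) (j+i)))) sequentially"
      by (intro eventually_ball_finite ballI integ) auto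
    have "eventually (\<lambda>n. (\<Sum>i\<le>L. c i * (\<integral>\<omega>. real (ffn (N n \<omega>) (j+i)) \<partial>M n)) = (\<integral>\<omega>. B L (N n \<omega>) \<partial>M n)) sequentially"
      using ev unfolding B_ffn by eventually_elim (simp add: integral_sum)
    moreover have "(\<lambda>n. \<Sum>i\<le>L. c i * (\<integral>\<omega>. real (ffn (N n \<omega>) (j+i)) \<partial>M n)) \<longlonglongrightarrow> T L"
      unfolding T_def by (intro tendsto_sum tendsto_mult tendsto_const lim)
    ultimately show ?thesis by (rule Lim_transform_eventually[rotated])
  qed
  have T: "T \<longlonglongrightarrow> p" unfolding T_def c_def p_def using T_lim[of j lam] by simp
  have P_eq: "measure (M n) {\<omega>\<in>space (M n). N n \<omega> = j} = (\<integral>\<omega>. (if N n \<omega> = j then 1 else 0) \<partial>M n)" for n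
  proof -
    have "(\<integral>\<omega>. (if N n \<omega> = j then 1 else 0) \<partial>M n) = (\<integral>\<omega>. indicator {\<omega>\<in>space (M n). N n \<omega> = j} \<omega> \<partial>M n)"
      by (intro Bochner_Integration.integral_cong) (auto simp: indicator_def)
    also have "\<dots> = measure (M n) {\<omega>\<in>space (M n). N n \<omega> = j}"
      by (simp add: Int_absorb2 subset_iff)
    finally show ?thesis by simp
  qed
  have intI: "integrable (M n) (\<lambda>\<omega>. (if N n \<omega> = j then 1 else 0::real))" for n
  proof -
    interpret prob_space "M n" by (rule prob)
    have [measurable]: "N n \<in> M n \<rightarrow>\<^sub>M count_space UNIV" by (rule Nm)
    show ?thesis by (intro integrable_const_bound[where B=1]) auto
  qed
  show ?thesis
    unfolding p_def[symmetric] tendsto_iff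
  proof (intro allI impI)
    fix e :: real assume e: "e > 0"
    have e2: "e/2 > 0" using e by simp
    have "eventually (\<lambda>L. dist (T L) p < e/2) sequentially"
      using T e2 unfolding tendsto_iff by blast
    then obtain L0 where L0: "\<And>L. L \<ge> L0 \<Longrightarrow> dist (T L) p < e/2"
      unfolding eventually_sequentially by blast
    have ev1: "eventually (\<lambda>n. dist (\<integral>\<omega>. B (2*L0) (N n \<omega>) \<partial>M n) (T (2*L0)) < e/2) sequentially"
      using EB[of "2*L0"] e2 unfolding tendsto_iff by blast
    have ev2: "eventually (\<lambda>n. dist (\<integral>\<omega>. B (2*L0+1) (N n \<omega>) \<partial>M n) (T (2*L0+1)) < e/2) sequentially"
      using EB[of "2*L0+1"] e2 unfolding tendsto_iff by blast
    have a1: "dist (T (2*L0)) p < e/2" and a2: "dist (T (2*L0+1)) p < e/2" using L0 by auto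
    show "eventually (\<lambda>n. dist (measure (M n) {\<omega>\<in>space (M n). N n \<omega> = j}) p < e) sequentially"
      using ev1 ev2 intB[of "2*L0"] intB[of "2*L0+1"]
    proof eventually_elim
      case (elim n)
      have up: "measure (M n) {\<omega>\<in>space (M n). N n \<omega> = j} \<le> (\<integral>\<omega>. B (2*L0) (N n \<omega>) \<partial>M n)"
        unfolding P_eq
      proof (rule integral_mono[OF intI elim(3)])
        fix \<omega> show "(if N n \<omega> = j then 1 else 0) \<le> B (2*L0) (N n \<omega>)"
          unfolding B_def by (rule bonf_ineq(1)) simp
      qed
      have lo: "(\<integral>\<omega>. B (2*L0+1) (N n \<omega>) \<partial>M n) \<le> measure (M n) {\<omega>\<in>space (M n). N n \<omega> = j}"
        unfolding P_eq
      proof (rule integral_mono[OF elim(4) intI])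
        fix \<omega> show "B (2*L0+1) (N n \<omega>) \<le> (if N n \<omega> = j then 1 else 0)"
          unfolding B_def by (rule bonf_ineq(2)) simp
      qed
      show ?case using up lo elim a1 a2 unfolding dist_real_def by linarith
    qed
  qed
qed



lemma real_le_iff_nat_floor: "x \<ge> 0 \<Longrightarrow> real j \<le> x \<longleftrightarrow> j \<le> nat \<lfloor>x\<rfloor>"
proof -
  assume x: "x \<ge> 0"
  have "j \<le> nat \<lfloor>x\<rfloor> \<longleftrightarrow> int j \<le> \<lfloor>x\<rfloor>" using x by (intro le_nat_iff) simp
  also have "\<dots> \<longleftrightarrow> real_of_int (int j) \<le> x" by (rule le_floor_iff)
  finally show ?thesis by simp
qed

lemma weak_conv_from_pmf:
  fixes M :: "nat \<Rightarrow> 'a measure" and N :: "nat \<Rightarrow> 'a \<Rightarrow> nat" and lam :: real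
  assumes prob: "\<And>n. prob_space (M n)" and Nm: "\<And>n. N n \<in> M n \<rightarrow>\<^sub>M count_space UNIV"
    and lam: "lam > 0"
    and conv: "\<And>j. (\<lambda>n. measure (M n) {\<omega>\<in>space (M n). N n \<omega> = j}) \<longlonglongrightarrow> lam^j / fact j * exp (-lam)"
  shows "weak_conv_m (\<lambda>n. distr (M n) borel (\<lambda>\<omega>. real (N n \<omega>))) (distr (measure_pmf (poisson_pmf lam)) borel real)"
  unfolding weak_conv_m_def weak_conv_def
proof (intro allI impI)
  fix x :: real
  have rm: "(\<lambda>\<omega>. real (N n \<omega>)) \<in> M n \<rightarrow>\<^sub>M borel" for n
    using measurable_compose[OF Nm[of n], of real borel] by simp
  have rm2: "real \<in> measure_pmf (poisson_pmf lam) \<rightarrow>\<^sub>M borel" by simp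
  show "(\<lambda>n. cdf (distr (M n) borel (\<lambda>\<omega>. real (N n \<omega>))) x) \<longlonglongrightarrow> cdf (distr (measure_pmf (poisson_pmf lam)) borel real) x"
  proof (cases "x \<ge> 0")
    case False
    have "cdf (distr (M n) borel (\<lambda>\<omega>. real (N n \<omega>))) x = 0" for n
    proof -
      have "(\<lambda>\<omega>. real (N n \<omega>)) -` {..x} \<inter> space (M n) = {}" using False by auto
      then show ?thesis unfolding cdf_def2 by (subst measure_distr[OF rm]) auto
    qed
    moreover have "cdf (distr (measure_pmf (poisson_pmf lam)) borel real) x = 0"
    proof -
      have "real -` {..x} = ({}::nat set)" using False by auto
      then show ?thesis unfolding cdf_def2 by (subst measure_distr[OF rm2]) auto
    qed
    ultimately show ?thesis by simp
  next
    case True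
    define k where "k = nat \<lfloor>x\<rfloor>"
    have set1: "(\<lambda>\<omega>. real (N n \<omega>)) -` {..x} \<inter> space (M n) = N n -` {..k} \<inter> space (M n)" for n
      using real_le_iff_nat_floor[OF True] by (auto simp: k_def)
    have c1: "cdf (distr (M n) borel (\<lambda>\<omega>. real (N n \<omega>))) x = (\<Sum>j\<le>k. measure (M n) {\<omega>\<in>space (M n). N n \<omega> = j})" for n
    proof -
      interpret prob_space "M n" by (rule prob)
      have "cdf (distr (M n) borel (\<lambda>\<omega>. real (N n \<omega>))) x = measure (M n) (N n -` {..k} \<inter> space (M n))"
        unfolding cdf_def2 by (subst measure_distr[OF rm]) (auto simp: set1)
      also have "\<dots> = measure (distr (M n) (count_space UNIV) (N n)) {..k}"
        by (subst measure_distr[OF Nm]) auto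
      also have "\<dots> = (\<Sum>j\<le>k. measure (distr (M n) (count_space UNIV) (N n)) {j})"
        by (rule measure_eq_sum_singleton) (auto simp: emeasure_distr[OF Nm])
      also have "\<dots> = (\<Sum>j\<le>k. measure (M n) {\<omega>\<in>space (M n). N n \<omega> = j})"
        by (intro sum.cong refl, subst measure_distr[OF Nm]) (auto intro!: arg_cong[where f="measure (M n)"])
      finally show ?thesis .
    qed
    have c2: "cdf (distr (measure_pmf (poisson_pmf lam)) borel real) x = (\<Sum>j\<le>k. lam^j / fact j * exp (-lam))"
    proof -
      have "cdf (distr (measure_pmf (poisson_pmf lam)) borel real) x = measure (measure_pmf (poisson_pmf lam)) {..k}"
        unfolding cdf_def2 using real_le_iff_nat_floor[OF True]
        by (subst measure_distr[OF rm2]) (auto simp: k_def intro!: arg_cong[where f="measure _"])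
      also have "\<dots> = (\<Sum>j\<le>k. pmf (poisson_pmf lam) j)"
        by (rule measure_measure_pmf_finite) simp
      also have "\<dots> = (\<Sum>j\<le>k. lam^j / fact j * exp (-lam))"
        using lam by simp
      finally show ?thesis .
    qed
    show ?thesis unfolding c1 c2 by (intro tendsto_sum conv)
  qed
qed



lemma nn_to_real:
  fixes M :: "nat \<Rightarrow> 'a measure" and g :: "nat \<Rightarrow> 'a \<Rightarrow> real"
  assumes gm: "\<And>n. g n \<in> borel_measurable (M n)" and gnn: "\<And>n \<omega>. g n \<omega> \<ge> 0"
    and lim: "(\<lambda>n. \<integral>\<^sup>+\<omega>. ennreal (g n \<omega>) \<partial>M n) \<longlonglongrightarrow> ennreal c" and c: "c \<ge> 0"
  shows "(\<lambda>n. \<integral>\<omega>. g n \<omega> \<partial>M n) \<longlonglongrightarrow> c"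
    and "eventually (\<lambda>n. integrable (M n) (g n)) sequentially"
proof -
  have "(\<integral>\<omega>. g n \<omega> \<partial>M n) = enn2real (\<integral>\<^sup>+\<omega>. ennreal (g n \<omega>) \<partial>M n)" for n
    using gm gnn by (intro integral_eq_nn_integral) auto
  then show "(\<lambda>n. \<integral>\<omega>. g n \<omega> \<partial>M n) \<longlonglongrightarrow> c"
    using tendsto_enn2real[OF lim c] by simp
  have "ennreal c < \<infinity>" by simp
  then have "eventually (\<lambda>n. (\<integral>\<^sup>+\<omega>. ennreal (g n \<omega>) \<partial>M n) < \<infinity>) sequentially"
    using lim order_tendstoD(2) by blast
  then show "eventually (\<lambda>n. integrable (M n) (g n)) sequentially"
    by eventually_elim (intro integrableI_nonneg gm, auto simp: gnn)
qed

locale setting =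
  fixes M :: "nat \<Rightarrow> 'a measure"
    and K :: "nat \<Rightarrow> 'a \<Rightarrow> nat"
    and tau :: "nat \<Rightarrow> nat \<Rightarrow> 'a \<Rightarrow> real"
    and f f1 :: "real \<Rightarrow> real"
  assumes prob: "\<And>n. prob_space (M n)"
    and K_meas: "\<And>n. K n \<in> measurable (M n) (count_space UNIV)"
    and tau_meas: "\<And>n k. tau n k \<in> borel_measurable (M n)"
    and f_deriv: "\<And>x. (f has_real_derivative f1 x) (at x)"
    and f_pos: "\<And>x. f x > 0"
    and moments: "\<And>m x. m \<ge> 1 \<Longrightarrow>
        ((\<lambda>n. \<integral>\<^sup>+ \<omega>. ennreal (factorial_moment_sum (K n \<omega>) (\<lambda>k. tau n k \<omega>) m x) \<partial>M n)
          \<longlongrightarrow> ennreal (\<Prod>j\<in>{1..m}. f (x j))) sequentially"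
begin

declare K_meas[measurable] tau_meas[measurable]

definition NN :: "nat \<Rightarrow> real set \<Rightarrow> 'a \<Rightarrow> nat" where
  "NN n A \<omega> = count_in (K n \<omega>) (\<lambda>k. tau n k \<omega>) A"

lemma NN_meas: "A \<in> sets borel \<Longrightarrow> NN n A \<in> M n \<rightarrow>\<^sub>M count_space UNIV"
  unfolding NN_def count_in_def
proof (rule measurable_card)
  fix i assume [measurable]: "A \<in> sets borel"
  have "{\<omega> \<in> space (M n). i \<in> {k \<in> {1..K n \<omega>}. tau n k \<omega> \<in> A}} = {\<omega> \<in> space (M n). 1 \<le> i \<and> i \<le> K n \<omega> \<and> tau n i \<omega> \<in> A}"
    by auto
  also have "\<dots> \<in> sets (M n)" by measurable
  finally show "{\<omega> \<in> space (M n). i \<in> {k \<in> {1..K n \<omega>}. tau n k \<omega> \<in> A}} \<in> sets (M n)" .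
qed

lemma fms_meas: "(\<lambda>\<omega>. factorial_moment_sum (K n \<omega>) (\<lambda>k. tau n k \<omega>) m x) \<in> borel_measurable (M n)"
proof (rule measurable_compose_countable[where f="\<lambda>k \<omega>. factorial_moment_sum k (\<lambda>k. tau n k \<omega>) m x", OF _ K_meas])
  fix k show "(\<lambda>\<omega>. factorial_moment_sum k (\<lambda>k. tau n k \<omega>) m x) \<in> borel_measurable (M n)"
    unfolding factorial_moment_sum_def by measurable
qed

lemma fms_nonneg: "factorial_moment_sum K' p m x \<ge> 0"
  unfolding factorial_moment_sum_def by (intro sum_nonneg prod_nonneg) auto

lemma fms_conv:
  assumes "m \<ge> 1"
  shows "(\<lambda>n. \<integral>\<omega>. factorial_moment_sum (K n \<omega>) (\<lambda>k. tau n k \<omega>) m x \<partial>M n) \<longlonglongrightarrow> (\<Prod>j\<in>{1..m}. f (x j))"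
    and "eventually (\<lambda>n. integrable (M n) (\<lambda>\<omega>. factorial_moment_sum (K n \<omega>) (\<lambda>k. tau n k \<omega>) m x)) sequentially"
proof -
  have c: "(\<Prod>j\<in>{1..m}. f (x j)) \<ge> 0" using f_pos by (intro prod_nonneg) (auto intro: less_imp_le)
  show "(\<lambda>n. \<integral>\<omega>. factorial_moment_sum (K n \<omega>) (\<lambda>k. tau n k \<omega>) m x \<partial>M n) \<longlonglongrightarrow> (\<Prod>j\<in>{1..m}. f (x j))"
    by (rule nn_to_real(1)[OF fms_meas fms_nonneg moments[OF assms] c])
  show "eventually (\<lambda>n. integrable (M n) (\<lambda>\<omega>. factorial_moment_sum (K n \<omega>) (\<lambda>k. tau n k \<omega>) m x)) sequentially"
    by (rule nn_to_real(2)[OF fms_meas fms_nonneg moments[OF assms] c])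
qed

lemma Dsum_meas: "(\<lambda>\<omega>. Dsum (K n \<omega>) (\<lambda>k. tau n k \<omega>) m x x') \<in> borel_measurable (M n)"
proof -
  have "Dsum (K n \<omega>) (\<lambda>k. tau n k \<omega>) m x x' = (\<Sum>X\<in>Pow {1..m}. (-1)^card ({1..m} - X) *
        factorial_moment_sum (K n \<omega>) (\<lambda>k. tau n k \<omega>) m (\<lambda>j. if j \<in> X then x j else x' j))" for \<omega>
    unfolding Dsum_def using D_expand[where p="\<lambda>k. tau n k \<omega>" and K="K n \<omega>" and m=m and x=x and x'=x'] .
  then show ?thesis
    by (simp only:) (intro borel_measurable_sum borel_measurable_times borel_measurable_const fms_meas)
qed

lemma D_conv:
  assumes m: "m \<ge> 1"
  shows "(\<lambda>n. \<integral>\<omega>. Dsum (K n \<omega>) (\<lambda>k. tau n k \<omega>) m x x' \<partial>M n) \<longlonglongrightarrow> (\<Prod>j\<in>{1..m}. f (x j) - f (x' j))"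
    and "eventually (\<lambda>n. integrable (M n) (\<lambda>\<omega>. Dsum (K n \<omega>) (\<lambda>k. tau n k \<omega>) m x x')) sequentially"
proof -
  define y where "y X = (\<lambda>j. if j \<in> X then x j else x' j)" for X
  define c where "c X = ((-1)^card ({1..m} - X) :: real)" for X
  have eqD: "Dsum (K n \<omega>) (\<lambda>k. tau n k \<omega>) m x x' =
      (\<Sum>X\<in>Pow {1..m}. c X * factorial_moment_sum (K n \<omega>) (\<lambda>k. tau n k \<omega>) m (y X))" for n \<omega>
    unfolding Dsum_def c_def y_def using D_expand[where p="\<lambda>k. tau n k \<omega>" and K="K n \<omega>" and m=m and x=x and x'=x'] .
  have ev: "eventually (\<lambda>n. \<forall>X\<in>Pow {1..m}. integrable (M n) (\<lambda>\<omega>. factorial_moment_sum (K n \<omega>) (\<lambda>k. tau n k \<omega>) m (y X))) sequentially"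
    by (intro eventually_ball_finite ballI fms_conv(2)[OF m]) auto
  then show "eventually (\<lambda>n. integrable (M n) (\<lambda>\<omega>. Dsum (K n \<omega>) (\<lambda>k. tau n k \<omega>) m x x')) sequentially"
    unfolding eqD by eventually_elim auto
  have "eventually (\<lambda>n. (\<Sum>X\<in>Pow {1..m}. c X * (\<integral>\<omega>. factorial_moment_sum (K n \<omega>) (\<lambda>k. tau n k \<omega>) m (y X) \<partial>M n))
      = (\<integral>\<omega>. Dsum (K n \<omega>) (\<lambda>k. tau n k \<omega>) m x x' \<partial>M n)) sequentially"
    using ev unfolding eqD by eventually_elim (simp add: integral_sum)
  note ev_eq = this
  have lim1: "(\<lambda>n. (\<Sum>X\<in>Pow {1..m}. c X * (\<integral>\<omega>. factorial_moment_sum (K n \<omega>) (\<lambda>k. tau n k \<omega>) m (y X) \<partial>M n)))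
      \<longlonglongrightarrow> (\<Sum>X\<in>Pow {1..m}. c X * (\<Prod>j\<in>{1..m}. f (y X j)))"
    by (intro tendsto_sum tendsto_mult tendsto_const fms_conv(1)[OF m])
  have eq2: "(\<Sum>X\<in>Pow {1..m}. c X * (\<Prod>j\<in>{1..m}. f (y X j))) = (\<Prod>j\<in>{1..m}. f (x j) - f (x' j))"
    unfolding prod_diff_expand[of "{1..m}" "\<lambda>j. f (x j)" "\<lambda>j. f (x' j)", OF finite_atLeastAtMost] c_def y_def
    by (intro sum.cong refl arg_cong2[where f="(*)"] prod.cong) auto
  show "(\<lambda>n. \<integral>\<omega>. Dsum (K n \<omega>) (\<lambda>k. tau n k \<omega>) m x x' \<partial>M n) \<longlonglongrightarrow> (\<Prod>j\<in>{1..m}. f (x j) - f (x' j))"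
    using Lim_transform_eventually[OF lim1 ev_eq] unfolding eq2 .
qed

lemma ffn_meas: "A \<in> sets borel \<Longrightarrow> (\<lambda>\<omega>. real (ffn (NN n A \<omega>) m)) \<in> borel_measurable (M n)"
  using measurable_compose[OF NN_meas[of A n], of "\<lambda>k. real (ffn k m)" borel] by simp

lemma NN_mono: "A \<subseteq> B \<Longrightarrow> NN n A \<omega> \<le> NN n B \<omega>"
  unfolding NN_def count_in_def by (intro card_mono) auto

lemma ffn_conv:
  assumes m: "m \<ge> 1"
  shows "(\<lambda>n. \<integral>\<omega>. real (ffn (NN n {y<..} \<omega>) m) \<partial>M n) \<longlonglongrightarrow> (-f1 y)^m"
    and "(\<lambda>n. \<integral>\<omega>. real (ffn (NN n {y..} \<omega>) m) \<partial>M n) \<longlonglongrightarrow> (-f1 y)^m"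
    and "eventually (\<lambda>n. integrable (M n) (\<lambda>\<omega>. real (ffn (NN n {y<..} \<omega>) m))) sequentially"
    and "eventually (\<lambda>n. integrable (M n) (\<lambda>\<omega>. real (ffn (NN n {y..} \<omega>) m))) sequentially"
proof -
  define lam where "lam = (-f1 y)^m"
  define DD where "DD a b n \<omega> = Dsum (K n \<omega>) (\<lambda>k. tau n k \<omega>) m (\<lambda>_. a) (\<lambda>_. b)" for a b n \<omega>
  define Dn where "Dn a b n = (\<integral>\<omega>. DD a b n \<omega> \<partial>M n)" for a b n
  define gG where "gG n \<omega> = real (ffn (NN n {y<..} \<omega>) m)" for n \<omega>
  define gH where "gH n \<omega> = real (ffn (NN n {y..} \<omega>) m)" for n \<omega>
  define G where "G n = (\<integral>\<omega>. gG n \<omega> \<partial>M n)" for n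
  define H where "H n = (\<integral>\<omega>. gH n \<omega> \<partial>M n)" for n
  have bnd1: "h^m * real (ffn (NN n {a+h..} \<omega>) m) \<le> DD a (a+h) n \<omega>" if "h > 0" for h a n \<omega>
    unfolding NN_def DD_def by (rule D_bounds(1)[OF that])
  have bnd2: "DD a (a+h) n \<omega> \<le> h^m * real (ffn (NN n {a<..} \<omega>) m)" if "h > 0" for h a n \<omega>
    unfolding NN_def DD_def by (rule D_bounds(2)[OF that])
  have Dlim: "(\<lambda>n. Dn a b n) \<longlonglongrightarrow> (f a - f b)^m" for a b
    unfolding Dn_def DD_def using D_conv(1)[OF m, of "\<lambda>_. a" "\<lambda>_. b"] by simp
  have Dint: "eventually (\<lambda>n. integrable (M n) (DD a b n)) sequentially" for a b
    unfolding DD_def using D_conv(2)[OF m, of "\<lambda>_. a" "\<lambda>_. b"] by simp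
  have mG: "gG n \<in> borel_measurable (M n)" for n unfolding gG_def by (rule ffn_meas) simp
  have mH: "gH n \<in> borel_measurable (M n)" for n unfolding gH_def by (rule ffn_meas) simp
  have GH: "gG n \<omega> \<le> gH n \<omega>" for n \<omega>
    unfolding gG_def gH_def by (simp add: ffn_mono NN_mono subset_iff)
  have intH: "eventually (\<lambda>n. integrable (M n) (gH n)) sequentially"
    using Dint[of "y-1" y]
  proof eventually_elim
    case (elim n)
    show ?case
    proof (rule Bochner_Integration.integrable_bound[OF elim mH], intro AE_I2)
      fix \<omega>
      have "1^m * real (ffn (NN n {y-1+1..} \<omega>) m) \<le> DD (y-1) (y-1+1) n \<omega>" by (rule bnd1) simp
      then show "norm (gH n \<omega>) \<le> norm (DD (y-1) y n \<omega>)" unfolding gH_def by simp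
    qed
  qed
  have intG: "eventually (\<lambda>n. integrable (M n) (gG n)) sequentially"
    using intH
  proof eventually_elim
    case (elim n)
    show ?case
      by (rule Bochner_Integration.integrable_bound[OF elim mG], intro AE_I2)
         (use GH in \<open>auto simp: gG_def gH_def\<close>)
  qed
  have q: "((\<lambda>h. (-((f (y+h) - f y)/h))^m) \<longlongrightarrow> lam) (at 0)"
    unfolding lam_def using DERIV_D[OF f_deriv[of y]] by (intro tendsto_intros)
  have main: "eventually (\<lambda>n. dist (G n) lam < e \<and> dist (H n) lam < e) sequentially" if e: "e > 0" for e
  proof -
    have e2: "e/2 > 0" using e by simp
    from q[unfolded tendsto_iff, rule_format, OF e2]
    obtain d where d: "d > 0" and dq: "\<And>h. h \<noteq> 0 \<Longrightarrow> dist h 0 < d \<Longrightarrow> dist ((-((f (y+h) - f y)/h))^m) lam < e/2"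
      unfolding eventually_at by blast
    define h where "h = d/2"
    have h: "h > 0" using d by (simp add: h_def)
    have hm: "h^m > 0" using h by simp
    have "dist ((-((f (y+h) - f y)/h))^m) lam < e/2" using dq[of h] d h by (simp add: h_def)
    moreover have "-((f (y+h) - f y)/h) = (f y - f (y+h))/h" by (metis minus_diff_eq minus_divide_left)
    ultimately have qp: "dist (((f y - f (y+h))/h)^m) lam < e/2" by simp
    have "dist ((-((f (y+ -h) - f y)/(-h)))^m) lam < e/2" using dq[of "-h"] d h by (simp add: h_def)
    moreover have "-((f (y+ -h) - f y)/(-h)) = (f (y-h) - f y)/h" using h by (simp add: field_simps)
    ultimately have qm: "dist (((f (y-h) - f y)/h)^m) lam < e/2" by simp
    have l1: "(\<lambda>n. Dn y (y+h) n / h^m) \<longlonglongrightarrow> (f y - f (y+h))^m / h^m"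
      by (rule tendsto_divide[OF Dlim tendsto_const]) (use h in simp)
    have l2: "(\<lambda>n. Dn (y-h) y n / h^m) \<longlonglongrightarrow> (f (y-h) - f y)^m / h^m"
      by (rule tendsto_divide[OF Dlim tendsto_const]) (use h in simp)
    have ev1: "eventually (\<lambda>n. dist (Dn y (y+h) n / h^m) ((f y - f (y+h))^m / h^m) < e/2) sequentially"
      using l1[unfolded tendsto_iff, rule_format, OF e2] .
    have ev2: "eventually (\<lambda>n. dist (Dn (y-h) y n / h^m) ((f (y-h) - f y)^m / h^m) < e/2) sequentially"
      using l2[unfolded tendsto_iff, rule_format, OF e2] .
    have qp': "dist ((f y - f (y+h))^m / h^m) lam < e/2" using qp by (simp only: power_divide)
    have qm': "dist ((f (y-h) - f y)^m / h^m) lam < e/2" using qm by (simp only: power_divide)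
    show ?thesis
      using ev1 ev2 intG intH Dint[of y "y+h"] Dint[of "y-h" y]
    proof eventually_elim
      case (elim n)
      have "Dn y (y+h) n \<le> (\<integral>\<omega>. h^m * gG n \<omega> \<partial>M n)"
        unfolding Dn_def
      proof (rule integral_mono)
        show "integrable (M n) (DD y (y + h) n)" by (rule elim)
        show "integrable (M n) (\<lambda>\<omega>. h^m * gG n \<omega>)" using elim by simp
        fix \<omega> show "DD y (y + h) n \<omega> \<le> h^m * gG n \<omega>" unfolding gG_def by (rule bnd2[OF h])
      qed
      then have a1: "Dn y (y+h) n / h^m \<le> G n" unfolding G_def using hm by (simp add: pos_divide_le_eq mult.commute)
      have "(\<integral>\<omega>. h^m * gH n \<omega> \<partial>M n) \<le> Dn (y-h) y n"
        unfolding Dn_def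
      proof (rule integral_mono)
        show "integrable (M n) (DD (y-h) y n)" by (rule elim)
        show "integrable (M n) (\<lambda>\<omega>. h^m * gH n \<omega>)" using elim by simp
        fix \<omega>
        have "h^m * real (ffn (NN n {y-h+h..} \<omega>) m) \<le> DD (y-h) (y-h+h) n \<omega>" by (rule bnd1[OF h])
        then show "h^m * gH n \<omega> \<le> DD (y-h) y n \<omega>" unfolding gH_def by simp
      qed
      then have a2: "H n \<le> Dn (y-h) y n / h^m" unfolding H_def using hm by (simp add: pos_le_divide_eq mult.commute)
      have a3: "G n \<le> H n" unfolding G_def H_def using elim GH by (intro integral_mono) auto
      show ?case using a1 a2 a3 elim(1,2) qp' qm' unfolding dist_real_def by linarith
    qed
  qed
  have "G \<longlonglongrightarrow> lam" unfolding tendsto_iff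
  proof (intro allI impI)
    fix e :: real assume "e > 0"
    from main[OF this] show "eventually (\<lambda>n. dist (G n) lam < e) sequentially"
      by (rule eventually_mono) simp
  qed
  moreover have "H \<longlonglongrightarrow> lam" unfolding tendsto_iff
  proof (intro allI impI)
    fix e :: real assume "e > 0"
    from main[OF this] show "eventually (\<lambda>n. dist (H n) lam < e) sequentially"
      by (rule eventually_mono) simp
  qed
  ultimately show "(\<lambda>n. \<integral>\<omega>. real (ffn (NN n {y<..} \<omega>) m) \<partial>M n) \<longlonglongrightarrow> (-f1 y)^m"
    and "(\<lambda>n. \<integral>\<omega>. real (ffn (NN n {y..} \<omega>) m) \<partial>M n) \<longlonglongrightarrow> (-f1 y)^m"
    unfolding G_def H_def gG_def gH_def lam_def by auto
  show "eventually (\<lambda>n. integrable (M n) (\<lambda>\<omega>. real (ffn (NN n {y<..} \<omega>) m))) sequentially"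
    using intG unfolding gG_def .
  show "eventually (\<lambda>n. integrable (M n) (\<lambda>\<omega>. real (ffn (NN n {y..} \<omega>) m))) sequentially"
    using intH unfolding gH_def .
qed

end



context setting begin

lemma pmf_conv_gen:
  assumes A: "A \<in> sets borel"
    and lim1: "\<And>m. m \<ge> 1 \<Longrightarrow> (\<lambda>n. \<integral>\<omega>. real (ffn (NN n A \<omega>) m) \<partial>M n) \<longlonglongrightarrow> lam^m"
    and int1: "\<And>m. m \<ge> 1 \<Longrightarrow> eventually (\<lambda>n. integrable (M n) (\<lambda>\<omega>. real (ffn (NN n A \<omega>) m))) sequentially"
  shows "(\<lambda>n. measure (M n) {\<omega>\<in>space (M n). NN n A \<omega> = j}) \<longlonglongrightarrow> lam^j / fact j * exp (-lam)"
proof -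
  have integ: "eventually (\<lambda>n. integrable (M n) (\<lambda>\<omega>. real (ffn (NN n A \<omega>) m))) sequentially" for m
  proof (cases "m = 0")
    case True
    show ?thesis unfolding True ffn_def
    proof (intro always_eventually allI)
      fix n interpret prob_space "M n" by (rule prob)
      show "integrable (M n) (\<lambda>\<omega>. real (prod ((-) (NN n A \<omega>)) {0..<0}))" by simp
    qed
  qed (use int1 in auto)
  have lim: "(\<lambda>n. \<integral>\<omega>. real (ffn (NN n A \<omega>) m) \<partial>M n) \<longlonglongrightarrow> lam^m" for m
  proof (cases "m = 0")
    case True
    have "(\<integral>\<omega>. real (ffn (NN n A \<omega>) m) \<partial>M n) = 1" for n
    proof -
      interpret prob_space "M n" by (rule prob)
      show ?thesis unfolding True ffn_def by (simp add: prob_space)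
    qed
    then show ?thesis using True by simp
  qed (use lim1 in auto)
  show ?thesis
    by (rule poisson_conv[OF prob NN_meas[OF A] integ lim])
qed

lemma pmf_conv:
  assumes A: "A \<in> {{y<..}, {y..}}"
  shows "(\<lambda>n. measure (M n) {\<omega>\<in>space (M n). NN n A \<omega> = j}) \<longlonglongrightarrow> (-f1 y)^j / fact j * exp (-(-f1 y))"
proof -
  have "A = {y<..} \<or> A = {y..}" using A by auto
  then show ?thesis
  proof
    assume a: "A = {y<..}"
    show ?thesis unfolding a by (rule pmf_conv_gen) (auto intro: ffn_conv(1,3))
  next
    assume a: "A = {y..}"
    show ?thesis unfolding a by (rule pmf_conv_gen) (auto intro: ffn_conv(2,4))
  qed
qed

lemma part1:
  assumes A: "A \<in> {{y<..}, {y..}}" and lam: "-f1 y > 0"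
  shows "weak_conv_m (\<lambda>n. distr (M n) borel (\<lambda>\<omega>. real (count_in (K n \<omega>) (\<lambda>k. tau n k \<omega>) A)))
                        (distr (measure_pmf (poisson_pmf (-f1 y))) borel real)"
proof -
  have Ab: "A \<in> sets borel" using A by auto
  show ?thesis
    using weak_conv_from_pmf[OF prob NN_meas[OF Ab] lam pmf_conv[OF A]] unfolding NN_def .
qed

lemma measure_N_sum:
  assumes "finite S" and Ab: "A \<in> sets borel"
  shows "measure (M n) (NN n A -` S \<inter> space (M n)) = (\<Sum>j\<in>S. measure (M n) {\<omega>\<in>space (M n). NN n A \<omega> = j})"
proof -
  interpret prob_space "M n" by (rule prob)
  note Nm = NN_meas[OF Ab, of n]
  have "measure (M n) (NN n A -` S \<inter> space (M n)) = measure (distr (M n) (count_space UNIV) (NN n A)) S"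
    by (subst measure_distr[OF Nm]) auto
  also have "\<dots> = (\<Sum>j\<in>S. measure (distr (M n) (count_space UNIV) (NN n A)) {j})"
    by (rule measure_eq_sum_singleton) (auto simp: emeasure_distr[OF Nm] assms)
  also have "\<dots> = (\<Sum>j\<in>S. measure (M n) {\<omega>\<in>space (M n). NN n A \<omega> = j})"
    by (intro sum.cong refl, subst measure_distr[OF Nm]) (auto intro!: arg_cong[where f="measure (M n)"])
  finally show ?thesis .
qed

lemma tail_lim:
  assumes A: "A \<in> {{y<..}, {y..}}"
  shows "(\<lambda>n. measure (M n) {\<omega>\<in>space (M n). k \<le> NN n A \<omega>}) \<longlonglongrightarrow> 1 - (\<Sum>j<k. (-f1 y)^j / fact j * exp (f1 y))"
proof -
  have Ab: "A \<in> sets borel" using A by auto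
  have eq: "measure (M n) {\<omega>\<in>space (M n). k \<le> NN n A \<omega>} = 1 - (\<Sum>j<k. measure (M n) {\<omega>\<in>space (M n). NN n A \<omega> = j})" for n
  proof -
    interpret prob_space "M n" by (rule prob)
    have [measurable]: "NN n A \<in> M n \<rightarrow>\<^sub>M count_space UNIV" by (rule NN_meas[OF Ab])
    have "{\<omega>\<in>space (M n). k \<le> NN n A \<omega>} = space (M n) - (NN n A -` {..<k} \<inter> space (M n))" by auto
    also have "measure (M n) \<dots> = 1 - measure (M n) (NN n A -` {..<k} \<inter> space (M n))"
      by (rule prob_compl) measurable
    finally show ?thesis using measure_N_sum[of "{..<k}" A n] Ab by simp
  qed
  show ?thesis unfolding eq
    using pmf_conv[OF A] by (intro tendsto_diff tendsto_const tendsto_sum) simp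
qed

end



lemma alg_step:
  fixes a L F E c q :: real
  assumes "F \<noteq> 0" "c \<noteq> 0"
  shows "a*L/F*E + (c*(-a*L)/(c*F)*E + (E*a)*(q*L/(c*F))) = a*(q*L)/(c*F)*E"
  using assms by (simp add: field_simps)

lemma P_deriv:
  fixes f1 f2 :: "real \<Rightarrow> real"
  assumes d: "\<And>x. (f1 has_real_derivative f2 x) (at x)"
  shows "((\<lambda>x. \<Sum>j<Suc k. (-f1 x)^j / fact j * exp (f1 x)) has_real_derivative
           f2 x * (-f1 x)^k / fact k * exp (f1 x)) (at x)"
proof (induction k)
  case 0
  have "((\<lambda>x. exp (f1 x)) has_real_derivative exp (f1 x) * f2 x) (at x)"
    by (rule DERIV_fun_exp[OF d])
  then show ?case by (simp add: mult.commute)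
next
  case (Suc k)
  have dm: "((\<lambda>x. - f1 x) has_real_derivative - f2 x) (at x)" by (rule DERIV_minus[OF d])
  have dp: "((\<lambda>x. (- f1 x)^Suc k) has_real_derivative (1 + of_nat k) * (- f2 x * (- f1 x)^k)) (at x)"
    by (rule DERIV_power_Suc[OF dm])
  have dt: "((\<lambda>x. (- f1 x)^Suc k / fact (Suc k) * exp (f1 x)) has_real_derivative
      (1 + of_nat k) * (- f2 x * (- f1 x)^k) / fact (Suc k) * exp (f1 x) + (exp (f1 x) * f2 x) * ((- f1 x)^Suc k / fact (Suc k))) (at x)"
    by (rule DERIV_mult[OF DERIV_cdivide[OF dp] DERIV_fun_exp[OF d]])
  have ds: "((\<lambda>x. (\<Sum>j<Suc k. (-f1 x)^j / fact j * exp (f1 x)) + (- f1 x)^Suc k / fact (Suc k) * exp (f1 x)) has_real_derivative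
      f2 x * (-f1 x)^k / fact k * exp (f1 x) + ((1 + of_nat k) * (- f2 x * (- f1 x)^k) / fact (Suc k) * exp (f1 x) + (exp (f1 x) * f2 x) * ((- f1 x)^Suc k / fact (Suc k)))) (at x)"
    by (rule DERIV_add[OF Suc dt])
  have fs: "(fact (Suc k) :: real) = (1 + of_nat k) * fact k" by simp
  have fk: "(fact k :: real) \<noteq> 0" by simp
  have eq: "f2 x * (-f1 x)^k / fact k * exp (f1 x) + ((1 + of_nat k) * (- f2 x * (- f1 x)^k) / fact (Suc k) * exp (f1 x) + (exp (f1 x) * f2 x) * ((- f1 x)^Suc k / fact (Suc k)))
      = f2 x * (-f1 x)^Suc k / fact (Suc k) * exp (f1 x)"
    unfolding fs power_Suc using fk by (intro alg_step) auto
  show ?case using DERIV_cong[OF ds eq] by (simp add: lessThan_Suc)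
qed



lemma kth:
  fixes p :: "nat \<Rightarrow> real"
  assumes dec: "\<And>i j. 1 \<le> i \<Longrightarrow> i \<le> j \<Longrightarrow> j \<le> K \<Longrightarrow> p j \<le> p i"
    and up: "\<And>u v. u \<in> A \<Longrightarrow> u \<le> v \<Longrightarrow> v \<in> A"
    and k: "k \<ge> 1"
  shows "(k \<le> K \<and> p k \<in> A) \<longleftrightarrow> k \<le> count_in K p A"
proof
  assume h: "k \<le> K \<and> p k \<in> A"
  have "{1..k} \<subseteq> {i \<in> {1..K}. p i \<in> A}"
  proof
    fix i assume "i \<in> {1..k}"
    then show "i \<in> {i \<in> {1..K}. p i \<in> A}" using h dec[of i k] up[of "p k" "p i"] by auto
  qed
  then have "card {1..k} \<le> card {i \<in> {1..K}. p i \<in> A}" by (intro card_mono) auto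
  then show "k \<le> count_in K p A" by (simp add: count_in_def)
next
  assume h: "k \<le> count_in K p A"
  show "k \<le> K \<and> p k \<in> A"
  proof (rule ccontr)
    assume n: "\<not> (k \<le> K \<and> p k \<in> A)"
    have "{i \<in> {1..K}. p i \<in> A} \<subseteq> {1..k-1}"
    proof
      fix i assume i: "i \<in> {i \<in> {1..K}. p i \<in> A}"
      show "i \<in> {1..k-1}"
      proof (rule ccontr)
        assume "i \<notin> {1..k-1}"
        then have "k \<le> i" using i by auto
        then show False using n i k dec[of k i] up[of "p i" "p k"] by auto
      qed
    qed
    then have "card {i \<in> {1..K}. p i \<in> A} \<le> card {1..k-1}" by (intro card_mono) auto
    then show False using h k by (simp add: count_in_def)
  qed
qed

lemma FTC_P:
  fixes f1 f2 :: "real \<Rightarrow> real"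
  assumes d: "\<And>x. (f1 has_real_derivative f2 x) (at x)" and ab: "a \<le> b"
  shows "integral {a..b} (\<lambda>x. f2 x * (- f1 x) ^ k / fact k * exp (f1 x)) =
     (\<Sum>j<Suc k. (-f1 b)^j / fact j * exp (f1 b)) - (\<Sum>j<Suc k. (-f1 a)^j / fact j * exp (f1 a))"
proof (rule integral_unique, rule fundamental_theorem_of_calculus[OF ab])
  fix x assume "x \<in> {a..b}"
  show "((\<lambda>x. \<Sum>j<Suc k. (-f1 x)^j / fact j * exp (f1 x)) has_vector_derivative
      f2 x * (- f1 x) ^ k / fact k * exp (f1 x)) (at x within {a..b})"
    unfolding has_real_derivative_iff_has_vector_derivative[symmetric]
    by (rule has_field_derivative_at_within[OF P_deriv[OF d]])
qed

lemma interval_charact: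
  fixes I :: "real set"
  assumes sub: "I \<subseteq> {a..b}" and sup: "{a<..<b} \<subseteq> I"
  shows "x \<in> I \<longleftrightarrow> (a < x \<and> x < b) \<or> (x = a \<and> a \<in> I) \<or> (x = b \<and> b \<in> I)"
proof
  assume x: "x \<in> I"
  then have "a \<le> x" "x \<le> b" using sub by auto
  then show "(a < x \<and> x < b) \<or> (x = a \<and> a \<in> I) \<or> (x = b \<and> b \<in> I)"
    using x by (cases "x = a"; cases "x = b") auto
next
  assume "(a < x \<and> x < b) \<or> (x = a \<and> a \<in> I) \<or> (x = b \<and> b \<in> I)"
  then show "x \<in> I" using sup by auto
qed

lemma interval_cases_eq:
  fixes I :: "real set"
  assumes sub: "I \<subseteq> {a..b}" and sup: "{a<..<b} \<subseteq> I" and ab: "a \<le> b"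
  shows "a \<in> I \<Longrightarrow> b \<in> I \<Longrightarrow> I = {a..} - {b<..}"
    and "a \<in> I \<Longrightarrow> b \<notin> I \<Longrightarrow> I = {a..} - {b..}"
    and "a \<notin> I \<Longrightarrow> b \<in> I \<Longrightarrow> I = {a<..} - {b<..}"
    and "a \<notin> I \<Longrightarrow> b \<notin> I \<Longrightarrow> I = {a<..} - {b..}"
proof -
  note c = interval_charact[OF sub sup]
  show "a \<in> I \<Longrightarrow> b \<in> I \<Longrightarrow> I = {a..} - {b<..}"
  proof (rule set_eqI)
    fix x assume "a \<in> I" "b \<in> I"
    then show "x \<in> I \<longleftrightarrow> x \<in> {a..} - {b<..}" unfolding c[of x] using ab by auto
  qed
  show "a \<in> I \<Longrightarrow> b \<notin> I \<Longrightarrow> I = {a..} - {b..}"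
  proof (rule set_eqI)
    fix x assume h: "a \<in> I" "b \<notin> I"
    then have "a \<noteq> b" by auto
    with h show "x \<in> I \<longleftrightarrow> x \<in> {a..} - {b..}" unfolding c[of x] using ab by auto
  qed
  show "a \<notin> I \<Longrightarrow> b \<in> I \<Longrightarrow> I = {a<..} - {b<..}"
  proof (rule set_eqI)
    fix x assume h: "a \<notin> I" "b \<in> I"
    then have "a \<noteq> b" by auto
    with h show "x \<in> I \<longleftrightarrow> x \<in> {a<..} - {b<..}" unfolding c[of x] using ab by auto
  qed
  show "a \<notin> I \<Longrightarrow> b \<notin> I \<Longrightarrow> I = {a<..} - {b..}"
  proof (rule set_eqI)
    fix x assume "a \<notin> I" "b \<notin> I"
    then show "x \<in> I \<longleftrightarrow> x \<in> {a<..} - {b..}" unfolding c[of x] using ab by auto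
  qed
qed

locale setting2 = setting +
  fixes f2 :: "real \<Rightarrow> real"
  assumes decr: "\<And>n \<omega> i j. \<omega> \<in> space (M n) \<Longrightarrow> 1 \<le> i \<Longrightarrow> i \<le> j \<Longrightarrow> j \<le> K n \<omega>
                 \<Longrightarrow> tau n j \<omega> \<le> tau n i \<omega>"
    and f1_deriv: "\<And>x. (f1 has_real_derivative f2 x) (at x)"
begin

definition Pk :: "nat \<Rightarrow> real \<Rightarrow> real" where
  "Pk k a = (\<Sum>j<k. (-f1 a)^j / fact j * exp (f1 a))"

definition Ev :: "nat \<Rightarrow> nat \<Rightarrow> real set \<Rightarrow> 'a set" where
  "Ev k n A = {\<omega>\<in>space (M n). k \<le> K n \<omega> \<and> tau n k \<omega> \<in> A}"

lemma Ev_sets: "A \<in> sets borel \<Longrightarrow> Ev k n A \<in> sets (M n)"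
proof -
  assume A: "A \<in> sets borel"
  have "Ev k n A = (K n -` {k..} \<inter> space (M n)) \<inter> (tau n k -` A \<inter> space (M n))" by (auto simp: Ev_def)
  also have "\<dots> \<in> sets (M n)"
    by (intro sets.Int measurable_sets[OF K_meas] measurable_sets[OF tau_meas A]) auto
  finally show ?thesis .
qed

lemma Ev_lim:
  assumes k: "k \<ge> 1" and A: "A \<in> {{a<..}, {a..}}"
  shows "(\<lambda>n. measure (M n) (Ev k n A)) \<longlonglongrightarrow> 1 - Pk k a"
proof -
  have "Ev k n A = {\<omega>\<in>space (M n). k \<le> NN n A \<omega>}" for n
  proof -
    have "(k \<le> K n \<omega> \<and> tau n k \<omega> \<in> A) \<longleftrightarrow> k \<le> NN n A \<omega>" if "\<omega> \<in> space (M n)" for \<omega>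
      unfolding NN_def
    proof (rule kth[OF _ _ k])
      show "\<And>i j. 1 \<le> i \<Longrightarrow> i \<le> j \<Longrightarrow> j \<le> K n \<omega> \<Longrightarrow> tau n j \<omega> \<le> tau n i \<omega>"
        using decr that by blast
      show "\<And>u v. u \<in> A \<Longrightarrow> u \<le> v \<Longrightarrow> v \<in> A" using A by auto
    qed
    then show ?thesis unfolding Ev_def by auto
  qed
  then show ?thesis using tail_lim[OF A, of k] unfolding Pk_def by simp
qed

lemma diff_lim:
  assumes k: "k \<ge> 1" and A1: "A1 \<in> {{a<..}, {a..}}" and A2: "A2 \<in> {{b<..}, {b..}}"
    and sub: "A2 \<subseteq> A1" and I: "I = A1 - A2"
  shows "(\<lambda>n. measure (M n) (Ev k n I)) \<longlonglongrightarrow> Pk k b - Pk k a"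
proof -
  have s1: "A1 \<in> sets borel" and s2: "A2 \<in> sets borel" using A1 A2 by auto
  have eq: "measure (M n) (Ev k n I) = measure (M n) (Ev k n A1) - measure (M n) (Ev k n A2)" for n
  proof -
    interpret prob_space "M n" by (rule prob)
    have "Ev k n I = Ev k n A1 - Ev k n A2" unfolding Ev_def I by auto
    moreover have "Ev k n A2 \<subseteq> Ev k n A1" unfolding Ev_def using sub by auto
    ultimately show ?thesis using finite_measure_Diff[OF Ev_sets[OF s1] Ev_sets[OF s2]] by simp
  qed
  show ?thesis unfolding eq
    using tendsto_diff[OF Ev_lim[OF k A1] Ev_lim[OF k A2]] by simp
qed

lemma part2:
  assumes k: "k \<ge> 1" and Ii: "is_interval I" and Ib: "bounded I"
  shows "(\<lambda>n. measure (M n) {\<omega> \<in> space (M n). k \<le> K n \<omega> \<and> tau n k \<omega> \<in> I})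
           \<longlonglongrightarrow> integral I (\<lambda>x. f2 x * (- f1 x) ^ (k - 1) / fact (k - 1) * exp (f1 x))"
proof -
  define g where "g x = f2 x * (- f1 x) ^ (k - 1) / fact (k - 1) * exp (f1 x)" for x
  have evI: "{\<omega> \<in> space (M n). k \<le> K n \<omega> \<and> tau n k \<omega> \<in> I} = Ev k n I" for n unfolding Ev_def ..
  have main: "(\<lambda>n. measure (M n) (Ev k n I)) \<longlonglongrightarrow> integral I g"
  proof (cases "I = {}")
    case True
    have "Ev k n I = {}" for n using True by (simp add: Ev_def)
    then show ?thesis using True by (simp only: measure_empty) simp
  next
    case ne: False
    define a where "a = Inf I"
    define b where "b = Sup I"
    have bb: "bdd_below I" "bdd_above I" using Ib by (auto intro: bounded_imp_bdd_below bounded_imp_bdd_above)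
    have sub: "I \<subseteq> {a..b}" unfolding a_def b_def using bb by (auto intro: cInf_lower cSup_upper)
    have sup: "{a<..<b} \<subseteq> I"
    proof
      fix x assume x: "x \<in> {a<..<b}"
      obtain u where u: "u \<in> I" "u < x" using x cInf_less_iff[OF ne bb(1)] unfolding a_def by auto
      obtain v where v: "v \<in> I" "x < v" using x less_cSup_iff[OF ne bb(2)] unfolding b_def by auto
      show "x \<in> I" using Ii u v unfolding is_interval_1 by (meson less_imp_le)
    qed
    obtain x0 where x0: "x0 \<in> I" using ne by auto
    have ab: "a \<le> b" using sub x0 by auto
    obtain k' where k': "k = Suc k'" using k by (cases k) auto
    have "{a..b} - I \<subseteq> {a,b}"
    proof
      fix x assume x: "x \<in> {a..b} - I"
      show "x \<in> {a,b}"
      proof (rule ccontr)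
        assume "x \<notin> {a,b}"
        then have "x \<in> {a<..<b}" using x by auto
        then show False using sup x by auto
      qed
    qed
    then have "negligible ({a..b} - I)" by (rule negligible_subset[OF negligible_finite, rotated]) simp
    then have intI: "integral I g = integral {a..b} g"
      by (rule integral_subset_negligible[OF sub])
    have ftc: "integral {a..b} g = Pk k b - Pk k a"
      unfolding g_def Pk_def k' using FTC_P[OF f1_deriv ab, of k'] by simp
    note ce = interval_cases_eq[OF sub sup ab]
    have lim: "(\<lambda>n. measure (M n) (Ev k n I)) \<longlonglongrightarrow> Pk k b - Pk k a"
    proof (cases "a \<in> I"; cases "b \<in> I")
      assume h: "a \<in> I" "b \<in> I"
      show ?thesis by (rule diff_lim[OF k _ _ _ ce(1)[OF h]]) (use ab in auto)
    next
      assume h: "a \<in> I" "b \<notin> I"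
      show ?thesis by (rule diff_lim[OF k _ _ _ ce(2)[OF h]]) (use ab in auto)
    next
      assume h: "a \<notin> I" "b \<in> I"
      show ?thesis by (rule diff_lim[OF k _ _ _ ce(3)[OF h]]) (use ab in auto)
    next
      assume h: "a \<notin> I" "b \<notin> I"
      have "x0 \<noteq> a" "x0 \<noteq> b" using h x0 by auto
      then have "a < b" using x0 sub by force
      then show ?thesis by (intro diff_lim[OF k _ _ _ ce(4)[OF h]]) auto
    qed
    show ?thesis unfolding intI ftc by (rule lim)
  qed
  then show ?thesis unfolding evI g_def .
qed

end


theorem lemma2:
  fixes M :: "nat \<Rightarrow> 'a measure"
    and K :: "nat \<Rightarrow> 'a \<Rightarrow> nat"
    and tau :: "nat \<Rightarrow> nat \<Rightarrow> 'a \<Rightarrow> real"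
    and f f1 f2 :: "real \<Rightarrow> real"
  assumes prob: "\<And>n. prob_space (M n)"
    and K_meas: "\<And>n. K n \<in> measurable (M n) (count_space UNIV)"
    and tau_meas: "\<And>n k. tau n k \<in> borel_measurable (M n)"
    and decr: "\<And>n \<omega> i j. \<omega> \<in> space (M n) \<Longrightarrow> 1 \<le> i \<Longrightarrow> i \<le> j \<Longrightarrow> j \<le> K n \<omega>
                 \<Longrightarrow> tau n j \<omega> \<le> tau n i \<omega>"
    and f_deriv: "\<And>x. (f has_real_derivative f1 x) (at x)"
    and f1_deriv: "\<And>x. (f1 has_real_derivative f2 x) (at x)"
    and f2_cont: "continuous_on UNIV f2"
    and f_pos: "\<And>x. f x > 0"
    and f1_neg: "\<And>x. f1 x < 0"
    and f2_pos: "\<And>x. f2 x > 0"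
    and f1_lim: "(f1 \<longlongrightarrow> 0) at_top"
    and moments: "\<And>m x. m \<ge> 1 \<Longrightarrow>
        ((\<lambda>n. \<integral>\<^sup>+ \<omega>. ennreal (factorial_moment_sum (K n \<omega>) (\<lambda>k. tau n k \<omega>) m x) \<partial>M n)
          \<longlongrightarrow> ennreal (\<Prod>j\<in>{1..m}. f (x j))) sequentially"
  shows "(\<forall>x. \<forall>A \<in> {{x<..}, {x..}}.
            weak_conv_m (\<lambda>n. distr (M n) borel (\<lambda>\<omega>. real (count_in (K n \<omega>) (\<lambda>k. tau n k \<omega>) A)))
                        (distr (measure_pmf (poisson_pmf (- f1 x))) borel real))
       \<and> (\<forall>k I. k \<ge> 1 \<longrightarrow> is_interval I \<longrightarrow> bounded I \<longrightarrow>
            ((\<lambda>n. measure (M n) {\<omega> \<in> space (M n). k \<le> K n \<omega> \<and> tau n k \<omega> \<in> I})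
              \<longlongrightarrow> integral I (\<lambda>x. f2 x * (- f1 x) ^ (k - 1) / fact (k - 1) * exp (f1 x)))
              sequentially)"
proof -
  interpret setting2 M K tau f f1 f2
    by (intro setting2.intro setting.intro setting2_axioms.intro) (fact prob K_meas tau_meas f_deriv f_pos moments decr f1_deriv)+
  show ?thesis
  proof (intro conjI allI ballI impI)
    fix x :: real and A assume A: "A \<in> {{x<..}, {x..}}"
    show "weak_conv_m (\<lambda>n. distr (M n) borel (\<lambda>\<omega>. real (count_in (K n \<omega>) (\<lambda>k. tau n k \<omega>) A)))
                        (distr (measure_pmf (poisson_pmf (- f1 x))) borel real)"
      using part1[OF A] f1_neg[of x] by simp
  next
    fix k :: nat and I :: "real set"
    assume "1 \<le> k" "is_interval I" "bounded I"
    then show "(\<lambda>n. measure (M n) {\<omega> \<in> space (M n). k \<le> K n \<omega> \<and> tau n k \<omega> \<in> I})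
              \<longlonglongrightarrow> integral I (\<lambda>x. f2 x * (- f1 x) ^ (k - 1) / fact (k - 1) * exp (f1 x))"
      by (rule part2)
  qed
qed

end
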